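(* Let $k\ge 0$ be an integer and let $g_{-k}<\dots<g_{-1}<g_0<g_1<\dots<g_k$ be the zeros of the Legendre polynomial $L_{2k+1}$ of degree $2k+1$ on $[-1,1]$, so that $g_{-i}=-g_i$ and $g_0=0$. Let $\hat v$ be a polynomial on $\hat K=[-1,1]^2$ whose restriction to each of the four edges of $\hat K$ is a polynomial (in the edge variable) of degree $\le 2k+1$. Then $$\sum_{i=-k}^{k}\gamma_i\big(\hat v(1,g_i)+\hat v(-1,g_i)\big)=\sum_{i=-k}^{k}\gamma_i\big(\hat v(g_i,1)+\hat v(g_i,-1)\big),$$ where, setting $g_{-(k+1)}:=-1$ and $g_{k+1}:=1$, $$\gamma_i=\prod_{\substack{j=-(k+1)\\ j\neq i}}^{k}\frac{1-g_j}{g_i-g_j}+\prod_{\substack{j=-k\\ j\ne i}}^{k+1}\frac{-1-g_j}{g_i-g_j},\qquad i=-k,\dots,k,$$ and these numbers satisfy $$\gamma_i=\frac{2}{g_i^2}\prod_{\substack{j=1\\ j\neq |i|}}^{k}\frac{1-g_j^2}{g_i^2-g_j^2}\quad (i\neq 0),\qquad \gamma_0=4\prod_{j=1}^{k}\frac{g_j^2-1}{g_j^2}.$$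
   Context: $\hat K=[-1,1]^2$ is the reference square with coordinates $(\hat x,\hat y)$. $L_n$ denotes the Legendre polynomial of degree $n$ on $[-1,1]$. Empty products equal $1$. *)

theory Defs
  imports "HOL-Analysis.Analysis" "HOL-Computational_Algebra.Polynomial"
begin

text \<open>Legendre polynomials on [-1,1], standard normalisation L_n(1) = 1, via Bonnet's recurrence
  (n+2) L_(n+2) = (2n+3) x L_(n+1) - (n+1) L_n.\<close>
fun legendre :: "nat \<Rightarrow> real poly" where
  "legendre 0 = 1"
| "legendre (Suc 0) = [:0, 1:]"
| "legendre (Suc (Suc n)) =
     smult (1 / real (n + 2))
       (smult (real (2 * n + 3)) ([:0, 1:] * legendre (Suc n)) - smult (real (n + 1)) (legendre n))"

definition bivariate_polynomial :: "(real \<Rightarrow> real \<Rightarrow> real) \<Rightarrow> bool" where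
  "bivariate_polynomial v \<longleftrightarrow>
     (\<exists>(c :: nat \<Rightarrow> nat \<Rightarrow> real) (N :: nat).
        \<forall>x y. v x y = (\<Sum>a\<le>N. \<Sum>b\<le>N. c a b * x ^ a * y ^ b))"

definition poly_deg_le_on_edge :: "(real \<Rightarrow> real) \<Rightarrow> nat \<Rightarrow> bool" where
  "poly_deg_le_on_edge f d \<longleftrightarrow>
     (\<exists>p :: real poly. degree p \<le> d \<and> (\<forall>t\<in>{-1..1}. f t = poly p t))"

definition ext_node :: "nat \<Rightarrow> (int \<Rightarrow> real) \<Rightarrow> int \<Rightarrow> real" where
  "ext_node k g i = (if i = - (int k + 1) then -1 else if i = int k + 1 then 1 else g i)"

definition gamma_w :: "nat \<Rightarrow> (int \<Rightarrow> real) \<Rightarrow> int \<Rightarrow> real" where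
  "gamma_w k g i =
     (\<Prod>j\<in>{- (int k + 1)..int k} - {i}. (1 - ext_node k g j) / (ext_node k g i - ext_node k g j))
   + (\<Prod>j\<in>{- int k..int k + 1} - {i}. (-1 - ext_node k g j) / (ext_node k g i - ext_node k g j))"

end

theory Submission
  imports Defs
begin


lemma lagrange:
  fixes p :: "real poly" and x :: "'a \<Rightarrow> real"
  assumes fin: "finite I" and inj: "inj_on x I" and deg: "degree p < card I"
  shows "poly p y = (\<Sum>i\<in>I. poly p (x i) * (\<Prod>j\<in>I-{i}. (y - x j) / (x i - x j)))"
proof -
  define L where "L i = (\<Prod>j\<in>I-{i}. [:- x j / (x i - x j), 1 / (x i - x j):])" for i
  have polyL: "poly (L i) z = (\<Prod>j\<in>I-{i}. (z - x j) / (x i - x j))" for i z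
    unfolding L_def poly_prod by (intro prod.cong) (auto simp: diff_divide_distrib)
  have degL: "degree (L i) \<le> card (I - {i})" for i
  proof -
    have "degree (L i) \<le> sum (degree \<circ> (\<lambda>j. [:- x j / (x i - x j), 1 / (x i - x j):])) (I - {i})"
      unfolding L_def using fin by (intro degree_prod_sum_le) auto
    also have "\<dots> \<le> sum (\<lambda>_. 1) (I - {i})"
      by (intro sum_mono) auto
    finally show ?thesis by simp
  qed
  define q where "q = (\<Sum>i\<in>I. smult (poly p (x i)) (L i))"
  have Lval: "poly (L i) (x m) = (if i = m then 1 else 0)" if "i \<in> I" "m \<in> I" for i m
  proof (cases "i = m")
    case True
    have "poly (L i) (x m) = (\<Prod>j\<in>I-{i}. 1)"
      unfolding polyL using True inj that by (intro prod.cong) (auto simp: inj_on_def)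
    then show ?thesis using True by simp
  next
    case False
    have "poly (L i) (x m) = 0"
      unfolding polyL using False that fin by (intro prod_zero) auto
    then show ?thesis using False by simp
  qed
  have qval: "poly q (x m) = poly p (x m)" if "m \<in> I" for m
  proof -
    have "poly q (x m) = (\<Sum>i\<in>I. poly p (x i) * (if i = m then 1 else 0))"
      unfolding q_def poly_sum by (intro sum.cong) (auto simp: Lval that)
    also have "\<dots> = poly p (x m)" using that fin by (simp add: if_distrib cong: if_cong)
    finally show ?thesis .
  qed
  have cardI: "card (x ` I) = card I" using inj by (simp add: card_image)
  have "I \<noteq> {}" using deg by auto
  then have "card I > 0" using fin by auto
  have degq: "degree q < card I"
    unfolding q_def
  proof (rule le_less_trans[OF degree_sum_le[OF fin]])
    fix i assume "i \<in> I"
    have "degree (smult (poly p (x i)) (L i)) \<le> card (I - {i})"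
      using degL[of i] degree_smult_le order.trans by blast
    also have "\<dots> = card I - 1" using \<open>i \<in> I\<close> fin by simp
    finally show "degree (smult (poly p (x i)) (L i)) \<le> card I - 1" .
  next
    show "card I - 1 < card I" using \<open>card I > 0\<close> by simp
  qed
  have "p = q"
    by (rule poly_eqI_degree[of "x ` I"]) (use qval cardI deg degq in auto)
  then have "poly p y = poly q y" by simp
  also have "\<dots> = (\<Sum>i\<in>I. poly p (x i) * (\<Prod>j\<in>I-{i}. (y - x j) / (x i - x j)))"
    unfolding q_def poly_sum by (simp add: polyL)
  finally show ?thesis .
qed




lemma legendre_odd: "poly (legendre n) (- x) = (-1) ^ n * poly (legendre n) x"
proof (induction n rule: legendre.induct)
  case (3 n)
  have "poly (legendre (Suc (Suc n))) (- x) =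
     (1 / real (n + 2)) * (real (2 * n + 3) * (- x * poly (legendre (Suc n)) (- x)) - real (n + 1) * poly (legendre n) (- x))"
    by simp
  also have "\<dots> = (1 / real (n + 2)) * (real (2 * n + 3) * (- x * ((-1)^Suc n * poly (legendre (Suc n)) x)) - real (n + 1) * ((-1)^n * poly (legendre n) x))"
    using 3 by simp
  also have "\<dots> = (-1) ^ Suc (Suc n) * poly (legendre (Suc (Suc n))) x"
    by (simp add: algebra_simps)
  finally show ?case .
qed auto

lemma legendre_one: "poly (legendre n) 1 = 1"
proof (induction n rule: legendre.induct)
  case (3 n)
  then show ?case by (simp add: divide_simps)
qed auto

lemma legendre_mone: "poly (legendre n) (-1) = (-1) ^ n"
  using legendre_odd[of n 1] legendre_one[of n] by simp



lemma prod_sym: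
  fixes f :: "int \<Rightarrow> real"
  shows "(\<Prod>j\<in>{- int k..int k}. f j) = f 0 * (\<Prod>j\<in>{1..int k}. f j * f (- j))"
proof (induction k)
  case 0 then show ?case by simp
next
  case (Suc k)
  have e1: "{- int (Suc k)..int (Suc k)} = insert (- (int k + 1)) (insert (int k + 1) {- int k..int k})" by auto
  have e2: "{1..int (Suc k)} = insert (int k + 1) {1..int k}" by auto
  show ?case unfolding e1 e2 using Suc by (simp add: mult_ac)
qed



lemma strict_mono_unique_aux:
  fixes f h :: "int \<Rightarrow> real"
  assumes f: "strict_mono_on A f" and h: "strict_mono_on A h"
    and img: "f ` A \<subseteq> h ` A" and i0: "i0 \<in> A" and lt: "f i0 < h i0"
    and below: "\<forall>j\<in>A. j < i0 \<longrightarrow> f j = h j"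
  shows False
proof -
  obtain j where j: "j \<in> A" "f i0 = h j" using img i0 by auto
  consider "j < i0" | "j = i0" | "j > i0" by linarith
  then show False
  proof cases
    case 1
    then have "f j = f i0" using below j by auto
    then have "j = i0" using inj_onD[OF strict_mono_on_imp_inj_on[OF f] _ j(1) i0] by blast
    then show False using 1 by simp
  next
    case 2 then show False using j lt by simp
  next
    case 3
    have "h i0 < h j" using strict_mono_onD[OF h i0 j(1) 3] .
    then show False using j lt by simp
  qed
qed

lemma strict_mono_unique:
  fixes f h :: "int \<Rightarrow> real"
  assumes fin: "finite A" and f: "strict_mono_on A f" and h: "strict_mono_on A h"
    and img: "f ` A = h ` A"
  shows "\<forall>i\<in>A. f i = h i"
proof (rule ccontr)
  assume "\<not> (\<forall>i\<in>A. f i = h i)"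
  then have ne: "{i\<in>A. f i \<noteq> h i} \<noteq> {}" by auto
  define i0 where "i0 = Min {i\<in>A. f i \<noteq> h i}"
  have i0: "i0 \<in> A" "f i0 \<noteq> h i0" using Min_in[OF _ ne] fin unfolding i0_def by auto
  have below: "\<forall>j\<in>A. j < i0 \<longrightarrow> f j = h j"
  proof (intro ballI impI)
    fix j assume "j \<in> A" "j < i0"
    show "f j = h j"
    proof (rule ccontr)
      assume "f j \<noteq> h j"
      then have "i0 \<le> j" unfolding i0_def using fin \<open>j \<in> A\<close> by (intro Min_le) auto
      then show False using \<open>j < i0\<close> by simp
    qed
  qed
  show False
  proof (cases "f i0 < h i0")
    case True
    then show False using strict_mono_unique_aux[OF f h _ i0(1) True below] img by auto
  next
    case False
    then have "h i0 < f i0" using i0 by auto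
    then show False using strict_mono_unique_aux[OF h f _ i0(1) _] img below by auto
  qed
qed



lemma biv_edge1:
  assumes "bivariate_polynomial v"
  shows "\<exists>q. \<forall>t. v x0 t = poly q t"
proof -
  obtain c N where cN: "\<forall>x y. v x y = (\<Sum>a\<le>N. \<Sum>b\<le>N. c a b * x ^ a * y ^ b)"
    using assms unfolding bivariate_polynomial_def by blast
  show ?thesis
    by (rule exI[of _ "\<Sum>a\<le>N. \<Sum>b\<le>N. smult (c a b * x0 ^ a) (monom 1 b)"])
       (simp add: cN poly_sum poly_monom)
qed

lemma biv_edge2:
  assumes "bivariate_polynomial v"
  shows "\<exists>q. \<forall>t. v t y0 = poly q t"
proof -
  obtain c N where cN: "\<forall>x y. v x y = (\<Sum>a\<le>N. \<Sum>b\<le>N. c a b * x ^ a * y ^ b)"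
    using assms unfolding bivariate_polynomial_def by blast
  show ?thesis
    by (rule exI[of _ "\<Sum>a\<le>N. \<Sum>b\<le>N. smult (c a b * y0 ^ b) (monom 1 a)"])
       (simp add: cN poly_sum poly_monom mult_ac)
qed

lemma edge_global:
  assumes "\<forall>t. f t = poly q t" and "poly_deg_le_on_edge f d"
  shows "\<exists>p. degree p \<le> d \<and> (\<forall>t. f t = poly p t)"
proof -
  obtain p where p: "degree p \<le> d" "\<forall>t\<in>{-1..1}. f t = poly p t"
    using assms(2) unfolding poly_deg_le_on_edge_def by blast
  have "p = q"
  proof (rule ccontr)
    assume "p \<noteq> q"
    then have "finite {x. poly (p - q) x = 0}" by (intro poly_roots_finite) auto
    moreover have "{-1..1::real} \<subseteq> {x. poly (p - q) x = 0}" using p assms(1) by auto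
    ultimately have "finite {-1..(1::real)}" using finite_subset by blast
    then show False using infinite_Icc[of "-1::real" 1] by simp
  qed
  then show ?thesis using p assms(1) by auto
qed




lemma alg: fixes x W D :: real
  assumes "x \<noteq> 1" "x \<noteq> -1" "D \<noteq> 0"
  shows "2/(x+1)*((W/(1-x))/D) + (-2)/(x-1)*((-W/(-1-x))/D) = 4*W/((1-x^2)*D)"
proof -
  have a: "1 - x \<noteq> 0" "-1 - x \<noteq> 0" "x + 1 \<noteq> 0" "x - 1 \<noteq> 0" using assms by auto
  have b: "1 - x^2 = (1 - x) * (1 + x)" by (simp add: algebra_simps power2_eq_square)
  show ?thesis unfolding b using a assms by (simp add: field_simps)
qed

context
  fixes k :: nat and g :: "int \<Rightarrow> real"
  assumes inj: "inj_on g {- int k..int k}"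
    and ne1: "\<forall>j\<in>{- int k..int k}. g j \<noteq> 1"
    and nem1: "\<forall>j\<in>{- int k..int k}. g j \<noteq> -1"
    and sym: "\<forall>j\<in>{- int k..int k}. g (- j) = - g j"
begin

lemma g0: "g 0 = 0" using sym[rule_format, of 0] by simp

lemma eA: "i \<in> {- int k..int k} \<Longrightarrow> ext_node k g i = g i"
  by (auto simp: ext_node_def)

lemma W2: "(\<Prod>j\<in>{- int k..int k}. (-1 - g j)) = - (\<Prod>j\<in>{- int k..int k}. (1 - g j))"
proof -
  have a: "(\<Prod>j\<in>{- int k..int k}. (-1 - g j)) = (-1 - g 0) * (\<Prod>j\<in>{1..int k}. (-1 - g j) * (-1 - g (- j)))"
    by (rule prod_sym)
  have b: "(\<Prod>j\<in>{- int k..int k}. (1 - g j)) = (1 - g 0) * (\<Prod>j\<in>{1..int k}. (1 - g j) * (1 - g (- j)))"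
    by (rule prod_sym)
  have c: "(\<Prod>j\<in>{1..int k}. (-1 - g j) * (-1 - g (- j))) = (\<Prod>j\<in>{1..int k}. (1 - g j) * (1 - g (- j)))"
    by (intro prod.cong) (use sym in \<open>auto simp: algebra_simps\<close>)
  show ?thesis using a b c g0 by simp
qed

lemma W1pos: "(\<Prod>j\<in>{- int k..int k}. (1 - g j)) \<noteq> 0"
  using ne1 by (simp add: prod_zero_iff)

lemma S1: "{- (int k + 1)..int k} = insert (- (int k + 1)) {- int k..int k}" by auto
lemma S2: "{- int k..int k + 1} = insert (int k + 1) {- int k..int k}" by auto

lemma injA: "inj_on (ext_node k g) {- int k..int k}"
  using inj by (simp add: inj_on_def eA)

lemma inj1: "inj_on (ext_node k g) {- (int k + 1)..int k}"
  unfolding S1 using injA nem1 by (auto simp: eA ext_node_def)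

lemma inj2: "inj_on (ext_node k g) {- int k..int k + 1}"
  unfolding S2 using injA ne1 by (auto simp: eA ext_node_def)

lemma c1: "(\<Prod>j\<in>{- int k..int k}. (1 - g j) / (-1 - g j)) = -1"
proof -
  have "(\<Prod>j\<in>{- int k..int k}. (1 - g j) / (-1 - g j)) = (\<Prod>j\<in>{- int k..int k}. (1 - g j)) / (\<Prod>j\<in>{- int k..int k}. (-1 - g j))"
    by (rule prod_dividef)
  then show ?thesis using W2 W1pos by simp
qed

lemma c2: "(\<Prod>j\<in>{- int k..int k}. (-1 - g j) / (1 - g j)) = -1"
proof -
  have "(\<Prod>j\<in>{- int k..int k}. (-1 - g j) / (1 - g j)) = (\<Prod>j\<in>{- int k..int k}. (-1 - g j)) / (\<Prod>j\<in>{- int k..int k}. (1 - g j))"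
    by (rule prod_dividef)
  then show ?thesis using W2 W1pos by simp
qed

lemma key:
  fixes p :: "real poly"
  assumes deg: "degree p \<le> 2 * k + 1"
  shows "(\<Sum>i\<in>{- int k..int k}. gamma_w k g i * poly p (g i)) = 2 * (poly p 1 + poly p (-1))"
proof -
  let ?e = "ext_node k g"
  let ?A = "{- int k..int k}"
  define l1 where "l1 i = (\<Prod>j\<in>{- (int k + 1)..int k} - {i}. (1 - ?e j) / (?e i - ?e j))" for i
  define l2 where "l2 i = (\<Prod>j\<in>{- int k..int k + 1} - {i}. (-1 - ?e j) / (?e i - ?e j))" for i
  have lo: "?e (- (int k + 1)) = -1" and hi: "?e (int k + 1) = 1" by (auto simp: ext_node_def)
  have lo2: "?e (- int k - 1) = -1" by (auto simp: ext_node_def)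
  have r1: "{- (int k + 1)..int k} - {- (int k + 1)} = ?A" by auto
  have r2: "{- int k..int k + 1} - {int k + 1} = ?A" by auto
  have L1: "poly p 1 = (\<Sum>i\<in>{- (int k + 1)..int k}. poly p (?e i) * l1 i)"
    unfolding l1_def by (rule lagrange[OF _ inj1]) (use deg in auto)
  also have "\<dots> = poly p (-1) * l1 (- (int k + 1)) + (\<Sum>i\<in>?A. poly p (g i) * l1 i)"
    unfolding S1 by (subst sum.insert) (auto simp: lo lo2 eA)
  also have "l1 (- (int k + 1)) = -1"
    unfolding l1_def r1 lo using c1 by (simp add: eA)
  finally have E1: "(\<Sum>i\<in>?A. poly p (g i) * l1 i) = poly p 1 + poly p (-1)" by simp
  have L2: "poly p (-1) = (\<Sum>i\<in>{- int k..int k + 1}. poly p (?e i) * l2 i)"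
    unfolding l2_def by (rule lagrange[OF _ inj2]) (use deg in auto)
  also have "\<dots> = poly p 1 * l2 (int k + 1) + (\<Sum>i\<in>?A. poly p (g i) * l2 i)"
    unfolding S2 by (subst sum.insert) (auto simp: hi eA)
  also have "l2 (int k + 1) = -1"
    unfolding l2_def r2 hi using c2 by (simp add: eA)
  finally have E2: "(\<Sum>i\<in>?A. poly p (g i) * l2 i) = poly p 1 + poly p (-1)" by simp
  have "(\<Sum>i\<in>?A. gamma_w k g i * poly p (g i)) = (\<Sum>i\<in>?A. poly p (g i) * l1 i) + (\<Sum>i\<in>?A. poly p (g i) * l2 i)"
    unfolding sum.distrib[symmetric] gamma_w_def l1_def l2_def by (intro sum.cong) (auto simp: algebra_simps)
  then show ?thesis using E1 E2 by simp
qed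

lemma gamma_form:
  assumes i: "i \<in> {- int k..int k}"
  shows "gamma_w k g i = 4 * (\<Prod>j\<in>{- int k..int k}. (1 - g j)) /
            ((1 - (g i)^2) * (\<Prod>j\<in>{- int k..int k} - {i}. (g i - g j)))"
proof -
  let ?e = "ext_node k g"
  let ?A = "{- int k..int k}"
  define D where "D = (\<Prod>j\<in>?A - {i}. (g i - g j))"
  define Q1 where "Q1 = (\<Prod>j\<in>?A - {i}. (1 - g j))"
  define Q2 where "Q2 = (\<Prod>j\<in>?A - {i}. (-1 - g j))"
  define W where "W = (\<Prod>j\<in>?A. (1 - g j))"
  have lo: "?e (- (int k + 1)) = -1" and lo2: "?e (- int k - 1) = -1" and hi: "?e (int k + 1) = 1"
    by (auto simp: ext_node_def)
  have s1: "{- (int k + 1)..int k} - {i} = insert (- (int k + 1)) (?A - {i})" using i by auto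
  have s2: "{- int k..int k + 1} - {i} = insert (int k + 1) (?A - {i})" using i by auto
  have gi: "g i \<noteq> 1" "g i \<noteq> -1" using i ne1 nem1 by auto
  have Dnz: "D \<noteq> 0" unfolding D_def using inj i by (auto simp: prod_zero_iff inj_on_def)
  have p1: "(\<Prod>j\<in>{- (int k + 1)..int k} - {i}. (1 - ?e j) / (?e i - ?e j)) = 2 / (g i + 1) * (Q1 / D)"
  proof -
    have "(\<Prod>j\<in>{- (int k + 1)..int k} - {i}. (1 - ?e j) / (?e i - ?e j))
        = (1 - ?e (- (int k + 1))) / (?e i - ?e (- (int k + 1))) * (\<Prod>j\<in>?A - {i}. (1 - ?e j) / (?e i - ?e j))"
      unfolding s1 by (subst prod.insert) auto
    also have "(\<Prod>j\<in>?A - {i}. (1 - ?e j) / (?e i - ?e j)) = (\<Prod>j\<in>?A - {i}. (1 - g j) / (g i - g j))"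
      using i by (intro prod.cong) (auto simp: eA)
    also have "\<dots> = Q1 / D" unfolding Q1_def D_def by (rule prod_dividef)
    finally show ?thesis using i by (simp add: lo lo2 eA)
  qed
  have p2: "(\<Prod>j\<in>{- int k..int k + 1} - {i}. (-1 - ?e j) / (?e i - ?e j)) = (-2) / (g i - 1) * (Q2 / D)"
  proof -
    have "(\<Prod>j\<in>{- int k..int k + 1} - {i}. (-1 - ?e j) / (?e i - ?e j))
        = (-1 - ?e (int k + 1)) / (?e i - ?e (int k + 1)) * (\<Prod>j\<in>?A - {i}. (-1 - ?e j) / (?e i - ?e j))"
      unfolding s2 by (subst prod.insert) auto
    also have "(\<Prod>j\<in>?A - {i}. (-1 - ?e j) / (?e i - ?e j)) = (\<Prod>j\<in>?A - {i}. (-1 - g j) / (g i - g j))"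
      using i by (intro prod.cong) (auto simp: eA)
    also have "\<dots> = Q2 / D" unfolding Q2_def D_def by (rule prod_dividef)
    finally show ?thesis using i by (simp add: hi eA)
  qed
  have w1: "W = (1 - g i) * Q1" unfolding W_def Q1_def using i by (subst prod.remove) auto
  have w2: "- W = (-1 - g i) * Q2" unfolding W2[folded W_def, symmetric] Q2_def using i by (subst prod.remove) auto
  have "gamma_w k g i = 2 / (g i + 1) * (Q1 / D) + (-2) / (g i - 1) * (Q2 / D)"
    unfolding gamma_w_def p1 p2 ..
  also have "\<dots> = 4 * W / ((1 - (g i)^2) * D)"
  proof -
    have a: "1 - g i \<noteq> 0" "-1 - g i \<noteq> 0" using gi by auto
    have q1: "Q1 = W / (1 - g i)" using w1 a by (simp add: field_simps)
    have q2: "Q2 = - W / (-1 - g i)" using w2 a by (simp add: field_simps)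
    show ?thesis unfolding q1 q2 using alg[OF gi Dnz] .
  qed
  finally show ?thesis unfolding W_def D_def .
qed

lemma Wform: "(\<Prod>j\<in>{- int k..int k}. (1 - g j)) = (\<Prod>j\<in>{1..int k}. (1 - (g j)^2))"
proof -
  have "(\<Prod>j\<in>{- int k..int k}. (1 - g j)) = (1 - g 0) * (\<Prod>j\<in>{1..int k}. (1 - g j) * (1 - g (- j)))"
    by (rule prod_sym)
  also have "\<dots> = (\<Prod>j\<in>{1..int k}. (1 - (g j)^2))"
    using g0 sym by (simp, intro prod.cong) (auto simp: algebra_simps power2_eq_square)
  finally show ?thesis .
qed

lemma Dform: assumes i: "i \<in> {- int k..int k}"
  shows "(\<Prod>j\<in>{- int k..int k} - {i}. (g i - g j)) =
    (if i = 0 then 1 else g i) * (\<Prod>j\<in>{1..int k}. (if j = \<bar>i\<bar> then 2 * g i else (g i)^2 - (g j)^2))"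
proof -
  define G where "G j = (if j = i then 1 else g i - g j)" for j
  have "(\<Prod>j\<in>{- int k..int k}. G j) = G i * (\<Prod>j\<in>{- int k..int k} - {i}. G j)"
    using i by (subst prod.remove) auto
  also have "(\<Prod>j\<in>{- int k..int k} - {i}. G j) = (\<Prod>j\<in>{- int k..int k} - {i}. (g i - g j))"
    by (intro prod.cong) (auto simp: G_def)
  finally have 1: "(\<Prod>j\<in>{- int k..int k} - {i}. (g i - g j)) = (\<Prod>j\<in>{- int k..int k}. G j)"
    by (simp add: G_def)
  have 2: "(\<Prod>j\<in>{- int k..int k}. G j) = G 0 * (\<Prod>j\<in>{1..int k}. G j * G (- j))"
    by (rule prod_sym)
  have 3: "G j * G (- j) = (if j = \<bar>i\<bar> then 2 * g i else (g i)^2 - (g j)^2)" if j: "j \<in> {1..int k}" for j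
  proof -
    have jA: "j \<in> {- int k..int k}" "- j \<in> {- int k..int k}" using j by auto
    have ia: "- i \<in> {- int k..int k}" using i by auto
    show ?thesis
    proof (cases "j = \<bar>i\<bar>")
      case True
      then show ?thesis using j sym ia i unfolding G_def
        by (cases "i \<ge> 0") (auto simp: abs_if split: if_splits)
    next
      case False
      then have "j \<noteq> i" "- j \<noteq> i" using j by auto
      then show ?thesis using False sym jA unfolding G_def by (simp add: algebra_simps power2_eq_square)
    qed
  qed
  have "G 0 = (if i = 0 then 1 else g i)" using g0 by (simp add: G_def)
  moreover have "(\<Prod>j\<in>{1..int k}. G j * G (- j)) = (\<Prod>j\<in>{1..int k}. (if j = \<bar>i\<bar> then 2 * g i else (g i)^2 - (g j)^2))"
    using 3 by (rule prod.cong[OF refl])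
  ultimately show ?thesis using 1 2 by simp
qed

lemma gamma_zero: "gamma_w k g 0 = 4 * (\<Prod>j\<in>{1..int k}. ((g j)\<^sup>2 - 1) / (g j)\<^sup>2)"
proof -
  have z: "(0::int) \<in> {- int k..int k}" by simp
  have D: "(\<Prod>j\<in>{- int k..int k} - {0}. (g 0 - g j)) = (\<Prod>j\<in>{1..int k}. (- ((g j)^2)))"
    unfolding Dform[OF z] using g0 by (auto intro!: prod.cong)
  have "gamma_w k g 0 = 4 * ((\<Prod>j\<in>{1..int k}. (1 - (g j)^2)) / (\<Prod>j\<in>{1..int k}. (- ((g j)^2))))"
    unfolding gamma_form[OF z] D Wform using g0 by simp
  also have "(\<Prod>j\<in>{1..int k}. (1 - (g j)^2)) / (\<Prod>j\<in>{1..int k}. (- ((g j)^2)))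
      = (\<Prod>j\<in>{1..int k}. (1 - (g j)^2) / (- ((g j)^2)))" by (rule prod_dividef[symmetric])
  also have "\<dots> = (\<Prod>j\<in>{1..int k}. ((g j)\<^sup>2 - 1) / (g j)\<^sup>2)"
    by (intro prod.cong refl) (simp add: minus_divide_right[symmetric] minus_divide_left diff_divide_distrib)
  finally show ?thesis .
qed

lemma gamma_nz:
  assumes i: "i \<in> {- int k..int k}" and nz: "i \<noteq> 0"
  shows "gamma_w k g i = 2 / (g i)\<^sup>2 *
            (\<Prod>j\<in>{1..int k} - {\<bar>i\<bar>}. (1 - (g j)\<^sup>2) / ((g i)\<^sup>2 - (g j)\<^sup>2))"
proof -
  define m where "m = \<bar>i\<bar>"
  have m: "m \<in> {1..int k}" using i nz unfolding m_def by auto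
  have gm: "(g m)^2 = (g i)^2"
  proof (cases "i \<ge> 0")
    case True then show ?thesis unfolding m_def by simp
  next
    case False
    then have "g m = - g i" unfolding m_def using sym i by simp
    then show ?thesis by simp
  qed
  have gi0: "g i \<noteq> 0" using inj_onD[OF inj, of i 0] i nz g0 by auto
  have gi1: "1 - (g i)^2 \<noteq> 0"
  proof
    assume "1 - (g i)^2 = 0"
    then have "(g i - 1) * (g i + 1) = 0" by (simp add: algebra_simps power2_eq_square)
    then show False using i ne1 nem1 by (auto simp: add_eq_0_iff)
  qed
  define P1 where "P1 = (\<Prod>j\<in>{1..int k} - {m}. (1 - (g j)^2))"
  define P2 where "P2 = (\<Prod>j\<in>{1..int k} - {m}. ((g i)^2 - (g j)^2))"
  have W: "(\<Prod>j\<in>{- int k..int k}. (1 - g j)) = (1 - (g i)^2) * P1"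
    unfolding Wform P1_def using m by (subst prod.remove[of _ m]) (auto simp: gm)
  have D: "(\<Prod>j\<in>{- int k..int k} - {i}. (g i - g j)) = g i * (2 * g i) * P2"
  proof -
    have "(\<Prod>j\<in>{1..int k}. (if j = m then 2 * g i else (g i)^2 - (g j)^2))
        = 2 * g i * (\<Prod>j\<in>{1..int k} - {m}. (if j = m then 2 * g i else (g i)^2 - (g j)^2))"
      using m by (subst prod.remove[of _ m]) auto
    also have "(\<Prod>j\<in>{1..int k} - {m}. (if j = m then 2 * g i else (g i)^2 - (g j)^2)) = P2"
      unfolding P2_def by (intro prod.cong) auto
    finally show ?thesis unfolding Dform[OF i] m_def[symmetric] using nz by simp
  qed
  have Dnz: "g i * (2 * g i) * P2 \<noteq> 0"
    unfolding D[symmetric] using inj i by (auto simp: prod_zero_iff inj_on_def)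
  then have P2nz: "P2 \<noteq> 0" by simp
  have "gamma_w k g i = 4 * ((1 - (g i)^2) * P1) / ((1 - (g i)^2) * (g i * (2 * g i) * P2))"
    unfolding gamma_form[OF i] W D ..
  also have "\<dots> = 2 / (g i)\<^sup>2 * (P1 / P2)"
    using gi0 gi1 P2nz by (simp add: field_simps power2_eq_square)
  also have "P1 / P2 = (\<Prod>j\<in>{1..int k} - {\<bar>i\<bar>}. (1 - (g j)\<^sup>2) / ((g i)\<^sup>2 - (g j)\<^sup>2))"
    unfolding P1_def P2_def m_def by (rule prod_dividef[symmetric])
  finally show ?thesis .
qed

end

theorem mainTheorem1:
  fixes k :: nat and g :: "int \<Rightarrow> real" and v :: "real \<Rightarrow> real \<Rightarrow> real"
  assumes g_mono: "strict_mono_on {- int k..int k} g"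
    and g_zeros: "{x. poly (legendre (2 * k + 1)) x = 0} = g ` {- int k..int k}"
    and v_poly: "bivariate_polynomial v"
    and e1: "poly_deg_le_on_edge (\<lambda>t. v 1 t) (2 * k + 1)"
    and e2: "poly_deg_le_on_edge (\<lambda>t. v (-1) t) (2 * k + 1)"
    and e3: "poly_deg_le_on_edge (\<lambda>t. v t 1) (2 * k + 1)"
    and e4: "poly_deg_le_on_edge (\<lambda>t. v t (-1)) (2 * k + 1)"
  shows "(\<forall>i\<in>{- int k..int k}. g (- i) = - g i) \<and> g 0 = 0
    \<and> (\<Sum>i\<in>{- int k..int k}. gamma_w k g i * (v 1 (g i) + v (-1) (g i)))
        = (\<Sum>i\<in>{- int k..int k}. gamma_w k g i * (v (g i) 1 + v (g i) (-1)))
    \<and> (\<forall>i\<in>{- int k..int k}. i \<noteq> 0 \<longrightarrow>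
          gamma_w k g i = 2 / (g i)\<^sup>2 *
            (\<Prod>j\<in>{1..int k} - {\<bar>i\<bar>}. (1 - (g j)\<^sup>2) / ((g i)\<^sup>2 - (g j)\<^sup>2)))
    \<and> gamma_w k g 0 = 4 * (\<Prod>j\<in>{1..int k}. ((g j)\<^sup>2 - 1) / (g j)\<^sup>2)"
proof -
  let ?A = "{- int k..int k}"
  let ?L = "legendre (2 * k + 1)"
  have fin: "finite ?A" by simp
  have inj: "inj_on g ?A" using strict_mono_on_imp_inj_on[OF g_mono] .
  have zero: "poly ?L (g j) = 0" if "j \<in> ?A" for j
  proof -
    have "g j \<in> {x. poly ?L x = 0}" using g_zeros that by blast
    then show ?thesis by simp
  qed
  have ne1: "\<forall>j\<in>?A. g j \<noteq> 1"
  proof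
    fix j assume "j \<in> ?A"
    show "g j \<noteq> 1"
    proof
      assume "g j = 1"
      then show False using zero[OF \<open>j \<in> ?A\<close>] legendre_one[of "2 * k + 1"] by simp
    qed
  qed
  have nem1: "\<forall>j\<in>?A. g j \<noteq> -1"
  proof
    fix j assume "j \<in> ?A"
    show "g j \<noteq> -1"
    proof
      assume "g j = -1"
      then show False using zero[OF \<open>j \<in> ?A\<close>] legendre_mone[of "2 * k + 1"] by simp
    qed
  qed
  have odd: "poly ?L (- x) = - poly ?L x" for x
    using legendre_odd[of "2 * k + 1" x] by simp
  define h where "h i = - g (- i)" for i
  have hmono: "strict_mono_on ?A h"
  proof (rule strict_mono_onI)
    fix r s assume "r \<in> ?A" "s \<in> ?A" "r < s"
    then have "g (- s) < g (- r)" using strict_mono_onD[OF g_mono, of "- s" "- r"] by auto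
    then show "h r < h s" unfolding h_def by simp
  qed
  have himg: "g ` ?A = h ` ?A"
  proof
    show "h ` ?A \<subseteq> g ` ?A"
    proof
      fix y assume "y \<in> h ` ?A"
      then obtain i where i: "i \<in> ?A" "y = - g (- i)" unfolding h_def by auto
      have "- i \<in> ?A" using i by auto
      then have "poly ?L y = 0" using i zero odd by simp
      then show "y \<in> g ` ?A" using g_zeros by blast
    qed
  next
    show "g ` ?A \<subseteq> h ` ?A"
    proof
      fix y assume "y \<in> g ` ?A"
      then obtain i where i: "i \<in> ?A" "y = g i" by auto
      have "poly ?L (- y) = 0" using i zero odd by simp
      then have "- y \<in> g ` ?A" using g_zeros by blast
      then obtain j where j: "j \<in> ?A" "- y = g j" by auto
      have "- j \<in> ?A" "y = h (- j)" using j unfolding h_def by auto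
      then show "y \<in> h ` ?A" by blast
    qed
  qed
  have sym: "\<forall>i\<in>?A. g (- i) = - g i"
  proof
    fix i assume i: "i \<in> ?A"
    have "g i = h i" using strict_mono_unique[OF fin g_mono hmono himg] i by blast
    then show "g (- i) = - g i" unfolding h_def by simp
  qed
  have g0: "g 0 = 0" using sym[rule_format, of 0] by simp
  have K: "(\<Sum>i\<in>?A. gamma_w k g i * poly p (g i)) = 2 * (poly p 1 + poly p (-1))"
    if "degree p \<le> 2 * k + 1" for p
    using key[OF inj ne1 nem1 sym that] .
  obtain q1 where q1: "\<forall>t. v 1 t = poly q1 t" using biv_edge1[OF v_poly] by blast
  obtain p1 where p1: "degree p1 \<le> 2 * k + 1" "\<forall>t. v 1 t = poly p1 t"
    using edge_global[of "\<lambda>t. v 1 t", OF q1 e1] by blast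
  obtain q2 where q2: "\<forall>t. v (-1) t = poly q2 t" using biv_edge1[OF v_poly] by blast
  obtain p2 where p2: "degree p2 \<le> 2 * k + 1" "\<forall>t. v (-1) t = poly p2 t"
    using edge_global[of "\<lambda>t. v (-1) t", OF q2 e2] by blast
  obtain q3 where q3: "\<forall>t. v t 1 = poly q3 t" using biv_edge2[OF v_poly] by blast
  obtain p3 where p3: "degree p3 \<le> 2 * k + 1" "\<forall>t. v t 1 = poly p3 t"
    using edge_global[of "\<lambda>t. v t 1", OF q3 e3] by blast
  obtain q4 where q4: "\<forall>t. v t (-1) = poly q4 t" using biv_edge2[OF v_poly] by blast
  obtain p4 where p4: "degree p4 \<le> 2 * k + 1" "\<forall>t. v t (-1) = poly p4 t"
    using edge_global[of "\<lambda>t. v t (-1)", OF q4 e4] by blast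
  have "(\<Sum>i\<in>?A. gamma_w k g i * (v 1 (g i) + v (-1) (g i)))
      = (\<Sum>i\<in>?A. gamma_w k g i * poly p1 (g i)) + (\<Sum>i\<in>?A. gamma_w k g i * poly p2 (g i))"
    unfolding sum.distrib[symmetric] using p1 p2 by (simp add: distrib_left)
  also have "\<dots> = 2 * (v 1 1 + v 1 (-1)) + 2 * (v (-1) 1 + v (-1) (-1))"
    using K[OF p1(1)] K[OF p2(1)] p1(2) p2(2) by simp
  also have "\<dots> = 2 * (v 1 1 + v (-1) 1) + 2 * (v 1 (-1) + v (-1) (-1))" by simp
  also have "\<dots> = (\<Sum>i\<in>?A. gamma_w k g i * poly p3 (g i)) + (\<Sum>i\<in>?A. gamma_w k g i * poly p4 (g i))"
    using K[OF p3(1)] K[OF p4(1)] p3(2) p4(2) by simp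
  also have "\<dots> = (\<Sum>i\<in>?A. gamma_w k g i * (v (g i) 1 + v (g i) (-1)))"
    unfolding sum.distrib[symmetric] using p3 p4 by (simp add: distrib_left)
  finally have S: "(\<Sum>i\<in>?A. gamma_w k g i * (v 1 (g i) + v (-1) (g i)))
      = (\<Sum>i\<in>?A. gamma_w k g i * (v (g i) 1 + v (g i) (-1)))" .
  show ?thesis
    using sym g0 S gamma_nz[OF inj ne1 nem1 sym] gamma_zero[OF inj ne1 nem1 sym] by blast
qed

end
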